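(* Let $(V,\mathcal H,\iota,W)$ be a generalized functional theory. Then $\overrightarrow{\mathrm{aff}(\iota^*(\mathcal P))}=\overrightarrow{\mathrm{aff}(\iota^*(\mathcal E))}$, and this space is canonically isomorphic to $\big(V/\iota^{-1}(\mathrm{span}\{\mathbb 1\})\big)^*$.
   Context: A generalized functional theory is a tuple $(V,\mathcal H,\iota,W)$ with $V$ a finite-dimensional real vector space, $\mathcal H$ a finite-dimensional complex Hilbert space, $\iota:V\to i\mathfrak u(\mathcal H)$ a linear map into the real vector space of Hermitian operators, and $W$ Hermitian. Density operators are regarded as elements of $(i\mathfrak u(\mathcal H))^*$ via $\Gamma\mapsto\mathrm{Tr}(\Gamma\,\cdot)$, and $\iota^*$ denotes the dual map. $\mathcal P$ is the set of pure states (rank-one projectors) and $\mathcal E$ the set of density operators. $\mathrm{aff}(X)$ is the affine hull and $\overrightarrow A=\{a-b:a,b\in A\}$ the translation space of an affine set $A$. $\mathbb 1$ is the identity operator on $\mathcal H$. *)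

theory Defs
  imports "HOL-Analysis.Analysis"
begin

text \<open>Finite-dimensional complex Hilbert space H = complex^'n; operators on H are
  matrices complex^'n^'n.\<close>

definition mtrace :: "complex^'n^'n \<Rightarrow> complex" where
  "mtrace A = (\<Sum>i\<in>UNIV. A $ i $ i)"

definition adjoint_mat :: "complex^'n^'n \<Rightarrow> complex^'n^'n" where
  "adjoint_mat A = (\<chi> i j. cnj (A $ j $ i))"

definition hermitian :: "complex^'n^'n \<Rightarrow> bool" where
  "hermitian A \<longleftrightarrow> adjoint_mat A = A"

definition pure_states :: "(complex^'n^'n) set" where
  "pure_states = {(\<chi> i j. \<psi> $ i * cnj (\<psi> $ j)) | \<psi> :: complex^'n. norm \<psi> = 1}"

definition density_ops :: "(complex^'n^'n) set" where
  "density_ops = {\<Gamma>. hermitian \<Gamma> \<and> mtrace \<Gamma> = 1 \<and>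
      (\<forall>x :: complex^'n. 0 \<le> Re (\<Sum>i\<in>UNIV. cnj (x $ i) * (\<Gamma> *v x) $ i))}"

text \<open>The dual map iota^*: a density operator Gamma (viewed as the functional Tr(Gamma .))
  is sent to the linear functional v \<mapsto> Tr(Gamma iota(v)) on V.\<close>
definition iota_star :: "('v \<Rightarrow> complex^'n^'n) \<Rightarrow> complex^'n^'n \<Rightarrow> ('v \<Rightarrow> real)" where
  "iota_star \<iota> \<Gamma> = (\<lambda>v. Re (mtrace (\<Gamma> ** \<iota> v)))"

definition fun_aff :: "('v \<Rightarrow> real) set \<Rightarrow> ('v \<Rightarrow> real) set" where
  "fun_aff S = {(\<lambda>v. \<Sum>x\<in>T. c x * x v) | T c. finite T \<and> T \<noteq> {} \<and> T \<subseteq> S \<and> sum c T = 1}"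

definition translation_space :: "('v \<Rightarrow> real) set \<Rightarrow> ('v \<Rightarrow> real) set" where
  "translation_space A = {(\<lambda>v. a v - b v) | a b. a \<in> A \<and> b \<in> A}"

end

theory Submission
  imports Defs
begin


lemma pure_in_density: "pure_states \<subseteq> (density_ops :: (complex^'n^'n) set)"
proof
  fix P :: "complex^'n^'n" assume "P \<in> pure_states"
  then obtain \<psi> :: "complex^'n" where n1: "norm \<psi> = 1" and P: "P = (\<chi> i j. \<psi> $ i * cnj (\<psi> $ j))"
    unfolding pure_states_def by blast
  have h: "hermitian P" unfolding P hermitian_def adjoint_mat_def by (simp add: vec_eq_iff mult.commute)
  have "mtrace P = (\<Sum>i\<in>UNIV. complex_of_real ((norm (\<psi> $ i))^2))"
    unfolding P mtrace_def by (intro sum.cong refl) (simp add: complex_norm_square[symmetric])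
  also have "\<dots> = complex_of_real (\<psi> \<bullet> \<psi>)"
    by (simp add: inner_vec_def power2_norm_eq_inner)
  also have "\<dots> = 1" using n1 by (simp add: norm_eq_1)
  finally have t: "mtrace P = 1" .
  have psd: "0 \<le> Re (\<Sum>i\<in>UNIV. cnj (x $ i) * (P *v x) $ i)" for x :: "complex^'n"
  proof -
    define s where "s = (\<Sum>j\<in>UNIV. cnj (\<psi> $ j) * x $ j)"
    have "(P *v x) $ i = \<psi> $ i * s" for i
      unfolding P s_def matrix_vector_mult_def by (simp add: sum_distrib_left mult.assoc)
    hence "(\<Sum>i\<in>UNIV. cnj (x $ i) * (P *v x) $ i) = (\<Sum>i\<in>UNIV. cnj (x $ i) * \<psi> $ i) * s"
      by (simp add: sum_distrib_right mult.assoc)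
    also have "(\<Sum>i\<in>UNIV. cnj (x $ i) * \<psi> $ i) = cnj s" unfolding s_def by (simp add: mult.commute)
    finally show ?thesis by (simp add: mult.commute[of "cnj s"] complex_mult_cnj)
  qed
  show "P \<in> density_ops" unfolding density_ops_def using h t psd by blast
qed

lemma iota_star_linear:
  fixes \<iota> :: "'v::real_vector \<Rightarrow> complex^'n^'n" and \<Gamma> :: "complex^'n^'n"
  assumes "linear \<iota>" shows "linear (iota_star \<iota> \<Gamma>)"
proof -
  interpret l: linear \<iota> by fact
  have a: "mtrace (A + B) = mtrace A + mtrace B" for A B :: "complex^'n^'n"
    by (simp add: mtrace_def sum.distrib)
  have s: "Re (mtrace (\<Gamma> ** (r *\<^sub>R B))) = r * Re (mtrace (\<Gamma> ** B))" for r and B :: "complex^'n^'n"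
  proof -
    have e: "(r *\<^sub>R B) $ i $ j = complex_of_real r * B $ i $ j" for i j
      by (simp only: vector_scaleR_component) (simp only: scaleR_conv_of_real)
    show ?thesis
      by (simp add: e mtrace_def matrix_matrix_mult_def sum_distrib_left mult.left_commute)
  qed
  show ?thesis
    unfolding iota_star_def
    by (rule linearI) (simp_all add: l.add l.scale matrix_add_ldistrib a s)
qed

lemma riesz:
  fixes g :: "'v::euclidean_space \<Rightarrow> real"
  assumes "linear g" shows "g v = (\<Sum>b\<in>Basis. g b *\<^sub>R b) \<bullet> v"
proof -
  interpret l: linear g by fact
  have "g v = g (\<Sum>b\<in>Basis. (v \<bullet> b) *\<^sub>R b)" by (simp add: euclidean_representation)
  also have "\<dots> = (\<Sum>b\<in>Basis. (v \<bullet> b) * g b)" by (simp add: l.sum l.scale)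
  also have "\<dots> = (\<Sum>b\<in>Basis. g b *\<^sub>R b) \<bullet> v" by (simp add: inner_sum_left inner_sum_right inner_commute[of _ v] mult.commute)
  finally show ?thesis .
qed

lemma aff_family:
  assumes "finite F" "F \<noteq> {}" "g ` F \<subseteq> S" "sum c F = 1"
  shows "(\<lambda>v. \<Sum>x\<in>F. c x * g x v) \<in> fun_aff S"
proof -
  define c' where "c' y = (\<Sum>x\<in>{x\<in>F. g x = y}. c x)" for y
  have "(\<lambda>v. \<Sum>x\<in>F. c x * g x v) = (\<lambda>v. \<Sum>y\<in>g ` F. c' y * y v)"
  proof
    fix v
    have "(\<Sum>x\<in>F. c x * g x v) = (\<Sum>y\<in>g ` F. \<Sum>x\<in>{x\<in>F. g x = y}. c x * g x v)"
      using assms(1) by (rule sum.image_gen)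
    also have "\<dots> = (\<Sum>y\<in>g ` F. c' y * y v)"
      unfolding c'_def by (rule sum.cong) (auto simp: sum_distrib_right)
    finally show "(\<Sum>x\<in>F. c x * g x v) = (\<Sum>y\<in>g ` F. c' y * y v)" .
  qed
  moreover have "sum c' (g ` F) = 1"
    using assms(4) sum.image_gen[OF assms(1), of c g] unfolding c'_def by simp
  ultimately show ?thesis unfolding fun_aff_def using assms by blast
qed



definition pm :: "complex^'n \<Rightarrow> complex^'n^'n" where
  "pm \<psi> = (\<chi> i j. \<psi> $ i * cnj (\<psi> $ j))"

lemma tr_pm: "mtrace (pm \<psi> ** B) = (\<Sum>a\<in>UNIV. \<Sum>b\<in>UNIV. \<psi> $ a * cnj (\<psi> $ b) * B $ b $ a)"
  by (simp add: mtrace_def pm_def matrix_matrix_mult_def)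

lemma ifz_simps:
  "(if P then x else 0) * y = (if P then x * y else (0::complex))"
  "y * (if P then x else 0) = (if P then y * x else (0::complex))"
  "cnj (if P then x else 0) = (if P then cnj x else 0)"
  by auto

lemma axis_comp: "axis i x $ a = (if a = i then x else 0)" by (simp add: axis_def)

lemma tr_axis: "mtrace (pm (axis i 1) ** B) = B $ i $ i"
  by (simp add: tr_pm axis_comp ifz_simps)

lemma tr_two:
  assumes "i \<noteq> j"
  shows "mtrace (pm (axis i \<alpha> + axis j \<beta>) ** B) =
     \<alpha> * cnj \<alpha> * B $ i $ i + \<beta> * cnj \<beta> * B $ j $ j + \<alpha> * cnj \<beta> * B $ j $ i + \<beta> * cnj \<alpha> * B $ i $ j"
  using assms by (simp add: tr_pm axis_comp ifz_simps distrib_left distrib_right sum.distrib)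

lemma norm_two:
  assumes "i \<noteq> j"
  shows "(norm (axis i \<alpha> + axis j (\<beta>::complex)))^2 = (norm \<alpha>)^2 + (norm \<beta>)^2"
  using assms by (simp add: power2_norm_eq_inner inner_add_left inner_add_right inner_axis_axis)

lemma "norm (axis i (1::complex)) = 1"
  by (simp add: norm_eq_1 inner_axis_axis)
lemma pure_pm: "norm \<psi> = 1 \<Longrightarrow> pm \<psi> \<in> pure_states"
  unfolding pure_states_def pm_def by blast

lemma norm_axis_c1: "norm (axis i (1::complex)) = 1"
  by (simp add: norm_eq_1 inner_axis_axis)

lemma scalar_from_pure:
  fixes B :: "complex^'n^'n"
  assumes hB: "hermitian B"
    and eq: "\<And>P Q. P \<in> pure_states \<Longrightarrow> Q \<in> pure_states \<Longrightarrow> Re (mtrace (P ** B)) = Re (mtrace (Q ** B))"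
  shows "B \<in> span {mat 1}"
proof -
  have n1: "norm (axis i (1::complex)) = 1" for i
    by (simp add: norm_eq_1 inner_axis_axis)
  have T: "Re (mtrace (pm \<psi> ** B)) = Re (B $ i $ i)" if "norm \<psi> = 1" for \<psi> i
    using eq[OF pure_pm[OF that] pure_pm[OF n1[of i]]] by (simp add: tr_axis)
  have hc: "B $ j $ i = cnj (B $ i $ j)" for i j
    using hB unfolding hermitian_def adjoint_mat_def by (metis (no_types, lifting) vec_lambda_beta)
  define r where "r = sqrt 2 / 2"
  have r2: "r * r = 1/2" unfolding r_def by (simp add: power_divide flip: power2_eq_square)
  have off: "B $ i $ j = 0" if ij: "i \<noteq> j" for i j
  proof -
    have nA: "norm (axis i (complex_of_real r) + axis j (complex_of_real r)) = 1"
    proof -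
      have "(norm (axis i (complex_of_real r) + axis j (complex_of_real r)))^2 = 1"
        unfolding norm_two[OF ij] by (simp add: power2_eq_square r2)
      thus ?thesis by (metis norm_ge_zero power2_eq_1_iff neg_0_le_iff_le le_minus_one_simps(3) order_trans)
    qed
    have nB: "norm (axis i (complex_of_real r) + axis j (\<i> * complex_of_real r)) = 1"
    proof -
      have "(norm (axis i (complex_of_real r) + axis j (\<i> * complex_of_real r)))^2 = 1"
        unfolding norm_two[OF ij] by (simp add: power2_eq_square r2 norm_mult)
      thus ?thesis by (metis norm_ge_zero power2_eq_1_iff neg_0_le_iff_le le_minus_one_simps(3) order_trans)
    qed
    have d: "Re (B $ j $ j) = Re (B $ i $ i)"
      using T[OF n1[of j], of i] by (simp add: tr_axis)
    have c1: "complex_of_real r * cnj (complex_of_real r) = 1/2"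
    proof -
      have "complex_of_real r * cnj (complex_of_real r) = complex_of_real (r * r)" by simp
      thus ?thesis using r2 by simp
    qed
    have c2: "(\<i> * complex_of_real r) * cnj (\<i> * complex_of_real r) = 1/2"
    proof -
      have "(\<i> * x) * cnj (\<i> * x) = x * cnj x" for x :: complex
        by (simp add: algebra_simps)
      from this[of "complex_of_real r"] show ?thesis using c1 by (simp only:)
    qed
    have c3: "complex_of_real r * cnj (\<i> * complex_of_real r) = - \<i>/2"
      using c1 by (simp add: mult.assoc)
    have c4: "(\<i> * complex_of_real r) * cnj (complex_of_real r) = \<i>/2"
      using c1 by (simp add: mult.assoc)
    have eA: "mtrace (pm (axis i (complex_of_real r) + axis j (complex_of_real r)) ** B)
        = (B $ i $ i + B $ j $ j + B $ j $ i + B $ i $ j) / 2"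
      unfolding tr_two[OF ij] c1 by (simp add: field_simps)
    have eB: "mtrace (pm (axis i (complex_of_real r) + axis j (\<i> * complex_of_real r)) ** B)
        = (B $ i $ i + B $ j $ j - \<i> * B $ j $ i + \<i> * B $ i $ j) / 2"
      unfolding tr_two[OF ij] c1 c2 c3 c4 by (simp add: field_simps)
    have A: "Re (B $ i $ j) = 0"
      using T[OF nA, of i] d hc[of i j] unfolding eA by simp
    have Bi: "Im (B $ i $ j) = 0"
      using T[OF nB, of i] d hc[of i j] unfolding eB by simp
    show ?thesis using A Bi complex_eqI by auto
  qed
  obtain k :: 'n where True by blast
  have diag: "B $ i $ i = complex_of_real (Re (B $ k $ k))" for i
  proof -
    have "Im (B $ i $ i) = 0" using hc[of i i] by (metis cnj.sel(2) neg_equal_zero)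
    moreover have "Re (B $ i $ i) = Re (B $ k $ k)"
      using T[OF n1[of i], of k] by (simp add: tr_axis)
    ultimately show ?thesis by (simp add: complex_eq_iff)
  qed
  define c where "c = Re (B $ k $ k)"
  have diag': "B $ i $ i = c *\<^sub>R 1" for i using diag unfolding c_def of_real_def by blast
  have "B $ i $ j = (c *\<^sub>R mat 1) $ i $ j" for i j
  proof (cases "i = j")
    case True
    have "(c *\<^sub>R mat 1) $ i $ j = c *\<^sub>R (1::complex)"
      unfolding vector_scaleR_component mat_def using True by simp
    thus ?thesis using diag'[of i] True by simp
  next
    case False
    have "(c *\<^sub>R mat 1) $ i $ j = c *\<^sub>R (0::complex)"
      unfolding vector_scaleR_component mat_def using False by simp
    thus ?thesis using off[OF False] by simp
  qed
  hence "B = c *\<^sub>R mat 1" by (simp add: vec_eq_iff)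
  thus ?thesis by (metis span_base span_scale singletonI)
qed

lemma tr_scale: "Re (mtrace (\<Gamma> ** (r *\<^sub>R B))) = r * Re (mtrace (\<Gamma> ** B))"
  for \<Gamma> B :: "complex^'n^'n"
proof -
  have e: "(r *\<^sub>R B) $ i $ j = complex_of_real r * B $ i $ j" for i j
    by (simp only: vector_scaleR_component) (simp only: scaleR_conv_of_real)
  show ?thesis
    by (simp add: e mtrace_def matrix_matrix_mult_def sum_distrib_left mult.left_commute)
qed

lemma ts_family:
  assumes "finite F" "g ` F \<subseteq> S" "sum c F = 0" "s0 \<in> S"
  shows "(\<lambda>v. \<Sum>x\<in>F. c x * g x v) \<in> translation_space (fun_aff S)"
proof -
  define F' where "F' = insert None (Some ` F)"
  define c' where "c' x = (case x of None \<Rightarrow> 1 | Some y \<Rightarrow> c y)" for x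
  define g' where "g' x = (case x of None \<Rightarrow> s0 | Some y \<Rightarrow> g y)" for x
  have fin: "finite F'" unfolding F'_def using assms(1) by simp
  have sc: "sum c' F' = 1" unfolding F'_def c'_def using assms(1,3)
    by (simp add: sum.reindex)
  have a: "(\<lambda>v. \<Sum>x\<in>F'. c' x * g' x v) \<in> fun_aff S"
    by (rule aff_family) (use fin sc assms(2,4) in \<open>auto simp: F'_def g'_def\<close>)
  have aeq: "(\<Sum>x\<in>F'. c' x * g' x v) = s0 v + (\<Sum>x\<in>F. c x * g x v)" for v
    unfolding F'_def c'_def g'_def using assms(1) by (simp add: sum.reindex)
  have b0: "(\<lambda>v. \<Sum>x\<in>{None}. c' x * g' x v) \<in> fun_aff S"
    by (rule aff_family) (use assms(4) in \<open>auto simp: c'_def g'_def\<close>)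
  have "(\<lambda>v. \<Sum>x\<in>{None}. c' x * g' x v) = s0" by (simp add: c'_def g'_def)
  with b0 have b: "s0 \<in> fun_aff S" by simp
  have eqn: "(\<lambda>v. \<Sum>x\<in>F. c x * g x v) = (\<lambda>v. (\<lambda>v. \<Sum>x\<in>F'. c' x * g' x v) v - s0 v)"
    by (simp add: aeq)
  show ?thesis unfolding translation_space_def
    apply (rule CollectI, rule exI[of _ "\<lambda>v. \<Sum>x\<in>F'. c' x * g' x v"], rule exI[of _ s0])
    apply (intro conjI)
      apply (fact eqn)
     apply (fact a)
    apply (fact b)
    done
qed

lemma fun_aff_props:
  fixes \<iota> :: "'v::real_vector \<Rightarrow> complex^'n^'n"
  assumes "\<And>x. x \<in> S \<Longrightarrow> linear x \<and> (\<forall>v r. \<iota> v = r *\<^sub>R mat 1 \<longrightarrow> x v = r)"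
    and "x \<in> fun_aff S"
  shows "linear x \<and> (\<forall>v r. \<iota> v = r *\<^sub>R mat 1 \<longrightarrow> x v = r)"
proof -
  obtain T c where x: "x = (\<lambda>v. \<Sum>y\<in>T. c y * y v)" and T: "finite T" "T \<noteq> {}" "T \<subseteq> S" "sum c T = 1"
    using assms(2) unfolding fun_aff_def by blast
  have lin: "linear y" if "y \<in> T" for y using assms(1) T(3) that by blast
  have "linear x"
    unfolding x
  proof (rule linearI)
    fix u w
    show "(\<Sum>y\<in>T. c y * y (u + w)) = (\<Sum>y\<in>T. c y * y u) + (\<Sum>y\<in>T. c y * y w)"
      by (subst sum.distrib[symmetric], rule sum.cong) (auto simp: linear_add[OF lin] distrib_left)
  next
    fix r u
    show "(\<Sum>y\<in>T. c y * y (r *\<^sub>R u)) = r *\<^sub>R (\<Sum>y\<in>T. c y * y u)"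
      unfolding scaleR_sum_right by (rule sum.cong) (auto simp: linear_scale[OF lin])
  qed
  moreover have "x v = r" if "\<iota> v = r *\<^sub>R mat 1" for v r
  proof -
    have "x v = (\<Sum>y\<in>T. c y * r)" unfolding x
      by (rule sum.cong) (use assms(1) T(3) that in auto)
    also have "\<dots> = r" using T(4) by (simp add: sum_distrib_right[symmetric])
    finally show ?thesis .
  qed
  ultimately show ?thesis by blast
qed

lemma ts_subset:
  fixes \<iota> :: "'v::real_vector \<Rightarrow> complex^'n^'n"
  assumes lin: "linear \<iota>"
  shows "translation_space (fun_aff (iota_star \<iota> ` density_ops))
     \<subseteq> {f :: 'v \<Rightarrow> real. linear f \<and> (\<forall>v. \<iota> v \<in> span {mat 1 :: complex^'n^'n} \<longrightarrow> f v = 0)}"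
proof
  fix h assume "h \<in> translation_space (fun_aff (iota_star \<iota> ` density_ops))"
  then obtain a b where h: "h = (\<lambda>v. a v - b v)" and ab: "a \<in> fun_aff (iota_star \<iota> ` density_ops)"
     "b \<in> fun_aff (iota_star \<iota> ` density_ops)"
    unfolding translation_space_def by blast
  have base: "linear x \<and> (\<forall>v r. \<iota> v = r *\<^sub>R mat 1 \<longrightarrow> x v = r)" if xin: "x \<in> iota_star \<iota> ` density_ops" for x
  proof -
    obtain \<Gamma> where G: "x = iota_star \<iota> \<Gamma>" "\<Gamma> \<in> density_ops" using xin by (rule imageE)
    have "x v = r" if "\<iota> v = r *\<^sub>R mat 1" for v r
      using G that by (simp add: iota_star_def tr_scale matrix_mul_rid density_ops_def)
    thus ?thesis using G iota_star_linear[OF lin] by blast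
  qed
  have pa: "linear a \<and> (\<forall>v r. \<iota> v = r *\<^sub>R mat 1 \<longrightarrow> a v = r)"
    by (rule fun_aff_props[OF base ab(1)])
  have pb: "linear b \<and> (\<forall>v r. \<iota> v = r *\<^sub>R mat 1 \<longrightarrow> b v = r)"
    by (rule fun_aff_props[OF base ab(2)])
  have "linear h" unfolding h
    using pa pb by (intro linear_compose_sub) auto
  moreover have "h v = 0" if vin: "\<iota> v \<in> span {mat 1 :: complex^'n^'n}" for v
  proof -
    obtain r where r: "\<iota> v = r *\<^sub>R mat 1" using vin by (auto simp: real_vector.span_singleton)
    have "a v = r" using pa r by blast
    moreover have "b v = r" using pb r by blast
    ultimately show ?thesis unfolding h by simp
  qed
  ultimately show "h \<in> {f. linear f \<and> (\<forall>v. \<iota> v \<in> span {mat 1} \<longrightarrow> f v = 0)}" by blast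
qed

lemma fun_aff_mono: "S \<subseteq> S' \<Longrightarrow> fun_aff S \<subseteq> fun_aff S'"
proof
  fix x assume "S \<subseteq> S'" "x \<in> fun_aff S"
  then obtain T c where "x = (\<lambda>v. \<Sum>x\<in>T. c x * x v)" "finite T" "T \<noteq> {}" "T \<subseteq> S" "sum c T = 1"
    unfolding fun_aff_def by blast
  moreover have "T \<subseteq> S'" using \<open>S \<subseteq> S'\<close> \<open>T \<subseteq> S\<close> by (rule order_trans[rotated])
  ultimately show "x \<in> fun_aff S'" unfolding fun_aff_def by blast
qed

lemma ts_mono0: "A \<subseteq> A' \<Longrightarrow> translation_space A \<subseteq> translation_space A'"
proof
  fix x assume "A \<subseteq> A'" "x \<in> translation_space A"
  then obtain a b where "x = (\<lambda>v. a v - b v)" "a \<in> A" "b \<in> A"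
    unfolding translation_space_def by blast
  with \<open>A \<subseteq> A'\<close> show "x \<in> translation_space A'" unfolding translation_space_def by blast
qed

lemma ts_mono: "S \<subseteq> S' \<Longrightarrow> translation_space (fun_aff S) \<subseteq> translation_space (fun_aff S')"
  by (intro ts_mono0 fun_aff_mono)

theorem lemma2p11:
  fixes \<iota> :: "'v::euclidean_space \<Rightarrow> complex^'n^'n"
    and W :: "complex^'n^'n"
  assumes lin: "linear \<iota>"
    and herm: "\<forall>v. hermitian (\<iota> v)"
    and hW: "hermitian W"
  shows "translation_space (fun_aff (iota_star \<iota> ` pure_states))
           = translation_space (fun_aff (iota_star \<iota> ` density_ops))
       \<and> translation_space (fun_aff (iota_star \<iota> ` density_ops))
           = {f :: 'v \<Rightarrow> real. linear f \<and>
                (\<forall>v. \<iota> v \<in> span {mat 1 :: complex^'n^'n} \<longrightarrow> f v = 0)}"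
  proof -
  define Z where "Z = {f :: 'v \<Rightarrow> real. linear f \<and>
                (\<forall>v. \<iota> v \<in> span {mat 1 :: complex^'n^'n} \<longrightarrow> f v = 0)}"
  have s1: "translation_space (fun_aff (iota_star \<iota> ` pure_states))
      \<subseteq> translation_space (fun_aff (iota_star \<iota> ` density_ops))"
    by (rule ts_mono) (use pure_in_density in blast)
  have s2: "translation_space (fun_aff (iota_star \<iota> ` density_ops)) \<subseteq> Z"
    unfolding Z_def by (rule ts_subset[OF lin])
  have s3: "Z \<subseteq> translation_space (fun_aff (iota_star \<iota> ` pure_states))"
  proof
    fix f assume "f \<in> Z"
    hence flin: "linear f" and fz: "\<And>v. \<iota> v \<in> span {mat 1} \<Longrightarrow> f v = 0" unfolding Z_def by auto
    define wv where "wv \<Gamma> = (\<Sum>b\<in>Basis. iota_star \<iota> \<Gamma> b *\<^sub>R b)" for \<Gamma>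
    have wvr: "iota_star \<iota> \<Gamma> v = wv \<Gamma> \<bullet> v" for \<Gamma> v
      unfolding wv_def by (rule riesz[OF iota_star_linear[OF lin]])
    define S where "S = {wv P - wv Q | P Q. P \<in> (pure_states :: (complex^'n^'n) set) \<and> Q \<in> pure_states}"
    define wf where "wf = (\<Sum>b\<in>Basis. f b *\<^sub>R b)"
    have fr: "f v = wf \<bullet> v" for v unfolding wf_def by (rule riesz[OF flin])
    obtain y z where y: "y \<in> span S" and zo: "\<And>w. w \<in> span S \<Longrightarrow> orthogonal z w" and yz: "wf = y + z"
      by (rule orthogonal_subspace_decomp_exists[of S wf]) blast
    have "\<iota> z \<in> span {mat 1}"
    proof (rule scalar_from_pure)
      show "hermitian (\<iota> z)" using herm by blast
    next
      fix P Q :: "complex^'n^'n" assume P: "P \<in> pure_states" and Q: "Q \<in> pure_states"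
      have "wv P - wv Q \<in> span S" unfolding S_def using P Q by (intro span_base) blast
      hence "z \<bullet> (wv P - wv Q) = 0" using zo orthogonal_def by blast
      hence "wv P \<bullet> z = wv Q \<bullet> z" by (simp add: inner_diff_right inner_commute)
      thus "Re (mtrace (P ** \<iota> z)) = Re (mtrace (Q ** \<iota> z))"
        using wvr[of P z] wvr[of Q z] by (simp add: iota_star_def)
    qed
    hence "wf \<bullet> z = 0" using fz fr by metis
    moreover have "y \<bullet> z = 0" using zo[OF y] by (simp add: orthogonal_def inner_commute)
    ultimately have "z \<bullet> z = 0" using yz by (simp add: inner_add_left)
    hence "z = 0" by simp
    hence ff: "f = (\<lambda>v. y \<bullet> v)" using fr yz by auto
    from y obtain F u where F: "finite F" "F \<subseteq> S" and ysum: "y = (\<Sum>s\<in>F. u s *\<^sub>R s)"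
      unfolding real_vector.span_explicit by blast
    have "\<forall>s\<in>S. \<exists>PQ. fst PQ \<in> pure_states \<and> snd PQ \<in> pure_states \<and> s = wv (fst PQ) - wv (snd PQ)"
      unfolding S_def by auto
    then obtain pq where pq: "\<forall>s\<in>S. fst (pq s) \<in> pure_states \<and> snd (pq s) \<in> pure_states
        \<and> s = wv (fst (pq s)) - wv (snd (pq s))" by (rule bchoice[THEN exE])
    define g where "g x = (if snd x then iota_star \<iota> (fst (pq (fst x))) else iota_star \<iota> (snd (pq (fst x))))" for x
    define c where "c x = (if snd x then u (fst x) else - u (fst x))" for x
    have yv: "y \<bullet> v = (\<Sum>x\<in>F \<times> UNIV. c x * g x v)" for v
    proof -
      have "y \<bullet> v = (\<Sum>s\<in>F. u s * (s \<bullet> v))" unfolding ysum by (simp add: inner_sum_left)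
      also have "\<dots> = (\<Sum>s\<in>F. u s * iota_star \<iota> (fst (pq s)) v - u s * iota_star \<iota> (snd (pq s)) v)"
      proof (rule sum.cong[OF refl])
        fix s assume "s \<in> F"
        define Pp where "Pp = fst (pq s)"
        define Qq where "Qq = snd (pq s)"
        have "s = wv Pp - wv Qq" unfolding Pp_def Qq_def using F pq \<open>s \<in> F\<close> by blast
        hence "s \<bullet> v = iota_star \<iota> Pp v - iota_star \<iota> Qq v"
          by (simp add: wvr inner_diff_left)
        hence "s \<bullet> v = iota_star \<iota> (fst (pq s)) v - iota_star \<iota> (snd (pq s)) v"
          unfolding Pp_def Qq_def .
        thus "u s * (s \<bullet> v) = u s * iota_star \<iota> (fst (pq s)) v - u s * iota_star \<iota> (snd (pq s)) v"
          by (simp add: right_diff_distrib)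
      qed
      also have "\<dots> = (\<Sum>x\<in>F \<times> UNIV. c x * g x v)"
        by (simp add: sum.cartesian_product' UNIV_bool c_def g_def)
      finally show ?thesis .
    qed
    have sc: "sum c (F \<times> UNIV) = 0"
      by (simp add: sum.cartesian_product' UNIV_bool c_def)
    have gF: "g ` (F \<times> UNIV) \<subseteq> iota_star \<iota> ` pure_states"
      using F pq by (auto simp: g_def)
    have s0: "iota_star \<iota> (pm (axis undefined 1)) \<in> iota_star \<iota> ` pure_states"
      using pure_pm[OF norm_axis_c1] by blast
    have "(\<lambda>v. \<Sum>x\<in>F \<times> UNIV. c x * g x v) \<in> translation_space (fun_aff (iota_star \<iota> ` pure_states))"
      by (rule ts_family[OF _ gF sc s0]) (use F in simp)
    moreover have "f = (\<lambda>v. \<Sum>x\<in>F \<times> UNIV. c x * g x v)"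
      unfolding ff by (rule ext) (rule yv)
    ultimately show "f \<in> translation_space (fun_aff (iota_star \<iota> ` pure_states))" by simp
  qed
  have e1: "translation_space (fun_aff (iota_star \<iota> ` pure_states))
      = translation_space (fun_aff (iota_star \<iota> ` density_ops))"
    by (rule subset_antisym[OF s1 order_trans[OF s2 s3]])
  have e2: "translation_space (fun_aff (iota_star \<iota> ` density_ops)) = Z"
    by (rule subset_antisym[OF s2 order_trans[OF s3 s1]])
  show ?thesis using e1 e2[unfolded Z_def] by (rule conjI)
qed

end
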